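(* For every integer $n\ge 1$, $\mathrm{TC}(\mathbb{S}^n)=4$, where $\mathbb{S}^n$ is the minimal finite model of the $n$-sphere.
   Context: Finite $T_0$ spaces are identified with finite posets (open sets are the down-closed sets). The non-Hausdorff join $A\circledast B$ is $A\sqcup B$ with the orders of $A$ and $B$ kept and $a\le b$ for all $a\in A,b\in B$. $\mathbb{S}^0$ is the two-point discrete space and inductively $\mathbb{S}^n=\mathbb{S}^{n-1}\circledast\mathbb{S}^0$ (a space with $2n+2$ points). Topological complexity is unreduced: $\mathrm{TC}(X)$ is the minimal $k$ such that $X\times X$ is covered by $k$ open sets each admitting a continuous section of $\pi:X^I\to X\times X$, $\gamma\mapsto(\gamma(0),\gamma(1))$. *)

theory Defs
  imports "HOL-Analysis.Analysis" "HOL-Library.Extended_Nat"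
begin

definition down_closed :: "'a set \<Rightarrow> ('a \<Rightarrow> 'a \<Rightarrow> bool) \<Rightarrow> 'a set \<Rightarrow> bool" where
  "down_closed P le U \<longleftrightarrow> U \<subseteq> P \<and> (\<forall>x\<in>U. \<forall>y\<in>P. le y x \<longrightarrow> y \<in> U)"

lemma istopology_down_closed: "istopology (down_closed P le)"
  unfolding istopology_def down_closed_def by blast

definition poset_topology :: "'a set \<Rightarrow> ('a \<Rightarrow> 'a \<Rightarrow> bool) \<Rightarrow> 'a topology" where
  "poset_topology P le = topology (down_closed P le)"

lemma openin_poset_topology: "openin (poset_topology P le) U \<longleftrightarrow> down_closed P le U"
  unfolding poset_topology_def by (metis topology_inverse' istopology_down_closed)

text \<open>Non-Hausdorff join of two posets (with disjoint carriers, inside a common type):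
  orders kept, and every element of the first below every element of the second.\<close>

definition nh_join :: "'a set \<times> ('a \<Rightarrow> 'a \<Rightarrow> bool) \<Rightarrow> 'a set \<times> ('a \<Rightarrow> 'a \<Rightarrow> bool)
    \<Rightarrow> 'a set \<times> ('a \<Rightarrow> 'a \<Rightarrow> bool)" where
  "nh_join A B = (fst A \<union> fst B,
     (\<lambda>x y. (x \<in> fst A \<and> y \<in> fst A \<and> snd A x y) \<or> (x \<in> fst B \<and> y \<in> fst B \<and> snd B x y)
          \<or> (x \<in> fst A \<and> y \<in> fst B)))"

definition S0_at :: "nat \<Rightarrow> (nat \<times> bool) set \<times> ((nat \<times> bool) \<Rightarrow> (nat \<times> bool) \<Rightarrow> bool)" where
  "S0_at k = ({(k, False), (k, True)}, (=))"

fun sphere_poset :: "nat \<Rightarrow> (nat \<times> bool) set \<times> ((nat \<times> bool) \<Rightarrow> (nat \<times> bool) \<Rightarrow> bool)" where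
  "sphere_poset 0 = S0_at 0"
| "sphere_poset (Suc n) = nh_join (sphere_poset n) (S0_at (Suc n))"

definition finite_sphere :: "nat \<Rightarrow> (nat \<times> bool) topology" where
  "finite_sphere n = poset_topology (fst (sphere_poset n)) (snd (sphere_poset n))"

definition path_space :: "'a topology \<Rightarrow> (real \<Rightarrow> 'a) topology" where
  "path_space X = subtopology
     (topology_generated_by
        {{\<gamma>. \<gamma> ` K \<subseteq> U} | K U. compactin (top_of_set {0..1::real}) K \<and> openin X U})
     {\<gamma>. continuous_map (top_of_set {0..1::real}) X \<gamma> \<and> (\<forall>t. t \<notin> {0..1} \<longrightarrow> \<gamma> t = undefined)}"

definition has_motion_planner :: "'a topology \<Rightarrow> ('a \<times> 'a) set \<Rightarrow> bool" where
  "has_motion_planner X U \<longleftrightarrow>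
     (\<exists>s. continuous_map (subtopology (prod_topology X X) U) (path_space X) s
          \<and> (\<forall>p\<in>U. (s p 0, s p 1) = p))"

text \<open>Unreduced topological complexity (infinity if no finite such cover exists).\<close>
definition TC :: "'a topology \<Rightarrow> enat" where
  "TC X = (INF k \<in> {k. \<exists>U :: nat \<Rightarrow> ('a \<times> 'a) set.
              (\<forall>i<k. openin (prod_topology X X) (U i) \<and> has_motion_planner X (U i))
              \<and> (\<Union>i<k. U i) = topspace (prod_topology X X)}. enat k)"

end

theory Submission
  imports Defs
begin

definition lep :: "nat \<Rightarrow> nat \<times> bool \<Rightarrow> nat \<times> bool \<Rightarrow> bool" where
  "lep n x y \<longleftrightarrow> fst x \<le> n \<and> fst y \<le> n \<and> (fst x < fst y \<or> x = y)"

lemma sphere_poset_eq: "fst (sphere_poset n) = {p. fst p \<le> n} \<and>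
   (\<forall>x y. fst x \<le> n \<longrightarrow> fst y \<le> n \<longrightarrow> snd (sphere_poset n) x y = lep n x y)"
proof (induction n)
  case 0
  have "{(0::nat, False), (0, True)} = {p::nat\<times>bool. fst p \<le> 0}"
    by (auto simp: set_eq_iff)
  then show ?case by (auto simp: S0_at_def lep_def)
next
  case (Suc n)
  have "x \<in> fst (sphere_poset n) \<longleftrightarrow> fst x \<le> n" for x using Suc by auto
  show ?case
  proof
    show "fst (sphere_poset (Suc n)) = {p. fst p \<le> Suc n}"
      using Suc by (auto simp: nh_join_def S0_at_def le_Suc_eq)
  next
    show "\<forall>x y. fst x \<le> Suc n \<longrightarrow> fst y \<le> Suc n \<longrightarrow> snd (sphere_poset (Suc n)) x y = lep (Suc n) x y"
    proof (intro allI impI)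
      fix x y :: "nat \<times> bool" assume xy: "fst x \<le> Suc n" "fst y \<le> Suc n"
      show "snd (sphere_poset (Suc n)) x y = lep (Suc n) x y"
        using Suc xy by (cases x, cases y) (auto simp: nh_join_def S0_at_def lep_def le_Suc_eq)
    qed
  qed
qed

lemma topspace_poset: "topspace (poset_topology P le) = P"
proof -
  have "openin (poset_topology P le) P" by (simp add: openin_poset_topology down_closed_def)
  then have "P \<subseteq> topspace (poset_topology P le)" by (simp add: openin_subset)
  moreover have "topspace (poset_topology P le) \<subseteq> P"
    unfolding topspace_def by (auto simp: openin_poset_topology down_closed_def)
  ultimately show ?thesis by blast
qed

lemma fs_eq: "finite_sphere n = poset_topology {p. fst p \<le> n} (lep n)"
proof -
  have P: "fst (sphere_poset n) = {p. fst p \<le> n}" using sphere_poset_eq[of n] by blast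
  have R: "snd (sphere_poset n) y x = lep n y x" if "x \<in> {p. fst p \<le> n}" "y \<in> {p. fst p \<le> n}" for x y
    using sphere_poset_eq[of n] that by blast
  have "down_closed (fst (sphere_poset n)) (snd (sphere_poset n)) U = down_closed {p. fst p \<le> n} (lep n) U" for U
  proof
    assume d: "down_closed (fst (sphere_poset n)) (snd (sphere_poset n)) U"
    show "down_closed {p. fst p \<le> n} (lep n) U" unfolding down_closed_def
    proof (intro conjI ballI impI)
      show "U \<subseteq> {p. fst p \<le> n}" using d P unfolding down_closed_def by simp
      fix x y assume xy: "x \<in> U" "y \<in> {p. fst p \<le> n}" "lep n y x"
      have "x \<in> {p. fst p \<le> n}" using d P xy(1) unfolding down_closed_def by blast
      then have "snd (sphere_poset n) y x" using R xy by simp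
      then show "y \<in> U" using d P xy unfolding down_closed_def by blast
    qed
  next
    assume d: "down_closed {p. fst p \<le> n} (lep n) U"
    show "down_closed (fst (sphere_poset n)) (snd (sphere_poset n)) U" unfolding down_closed_def P
    proof (intro conjI ballI impI)
      show "U \<subseteq> {p. fst p \<le> n}" using d unfolding down_closed_def by simp
      fix x y assume xy: "x \<in> U" "y \<in> {p. fst p \<le> n}" "snd (sphere_poset n) y x"
      have "x \<in> {p. fst p \<le> n}" using d xy(1) unfolding down_closed_def by blast
      then have "lep n y x" using R xy by simp
      then show "y \<in> U" using d xy unfolding down_closed_def by blast
    qed
  qed
  then have "down_closed (fst (sphere_poset n)) (snd (sphere_poset n)) = down_closed {p. fst p \<le> n} (lep n)"
    by (rule ext)
  then show ?thesis by (simp add: finite_sphere_def poset_topology_def)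
qed

lemma topspace_fs: "topspace (finite_sphere n) = {p. fst p \<le> n}"
  by (simp add: fs_eq topspace_poset)

lemma openin_fs: "openin (finite_sphere n) W \<longleftrightarrow> W \<subseteq> {p. fst p \<le> n} \<and> (\<forall>x\<in>W. \<forall>y. lep n y x \<longrightarrow> y \<in> W)"
  by (auto simp: fs_eq openin_poset_topology down_closed_def lep_def)

lemma lep_trans: "lep n x y \<Longrightarrow> lep n y z \<Longrightarrow> lep n x z"
  by (auto simp: lep_def)

lemma down_open: "x \<in> {p. fst p \<le> n} \<Longrightarrow> openin (finite_sphere n) {y. lep n y x}"
  unfolding openin_fs by (auto simp: lep_def)

lemma cont_fs:
  fixes S :: "real set"
  shows "continuous_map (top_of_set S) (finite_sphere n) \<gamma> \<longleftrightarrow>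
    (\<forall>t\<in>S. fst (\<gamma> t) \<le> n \<and> (\<exists>e>0. \<forall>s\<in>S. dist s t < e \<longrightarrow> lep n (\<gamma> s) (\<gamma> t)))"
proof
  assume c: "continuous_map (top_of_set S) (finite_sphere n) \<gamma>"
  show "\<forall>t\<in>S. fst (\<gamma> t) \<le> n \<and> (\<exists>e>0. \<forall>s\<in>S. dist s t < e \<longrightarrow> lep n (\<gamma> s) (\<gamma> t))"
  proof
    fix t assume t: "t \<in> S"
    have g: "fst (\<gamma> t) \<le> n" using c t by (auto simp: continuous_map_def topspace_fs)
    have "openin (top_of_set S) {s \<in> topspace (top_of_set S). \<gamma> s \<in> {y. lep n y (\<gamma> t)}}"
      using c down_open[of "\<gamma> t" n] g by (auto simp: continuous_map_def)
    then have "openin (top_of_set S) {s\<in>S. lep n (\<gamma> s) (\<gamma> t)}" by simp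
    moreover have "t \<in> {s\<in>S. lep n (\<gamma> s) (\<gamma> t)}" using t g by (simp add: lep_def)
    ultimately obtain e where "e>0" "\<forall>s\<in>S. dist s t < e \<longrightarrow> s \<in> {s\<in>S. lep n (\<gamma> s) (\<gamma> t)}"
      unfolding openin_euclidean_subtopology_iff by blast
    then show "fst (\<gamma> t) \<le> n \<and> (\<exists>e>0. \<forall>s\<in>S. dist s t < e \<longrightarrow> lep n (\<gamma> s) (\<gamma> t))"
      using g by auto
  qed
next
  assume r: "\<forall>t\<in>S. fst (\<gamma> t) \<le> n \<and> (\<exists>e>0. \<forall>s\<in>S. dist s t < e \<longrightarrow> lep n (\<gamma> s) (\<gamma> t))"
  show "continuous_map (top_of_set S) (finite_sphere n) \<gamma>"
    unfolding continuous_map_def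
  proof (intro conjI allI impI)
    show "\<gamma> \<in> topspace (top_of_set S) \<rightarrow> topspace (finite_sphere n)"
      using r by (auto simp: topspace_fs)
  next
    fix W assume W: "openin (finite_sphere n) W"
    show "openin (top_of_set S) {x \<in> topspace (top_of_set S). \<gamma> x \<in> W}"
      unfolding openin_euclidean_subtopology_iff
    proof (intro conjI ballI)
      fix t assume t: "t \<in> {x \<in> topspace (top_of_set S). \<gamma> x \<in> W}"
      then obtain e where e: "e>0" "\<forall>s\<in>S. dist s t < e \<longrightarrow> lep n (\<gamma> s) (\<gamma> t)" using r by auto
      have Wd: "\<forall>x\<in>W. \<forall>y. lep n y x \<longrightarrow> y \<in> W" using W unfolding openin_fs by blast
      show "\<exists>e>0. \<forall>x'\<in>S. dist x' t < e \<longrightarrow> x' \<in> {x \<in> topspace (top_of_set S). \<gamma> x \<in> W}"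
      proof (intro exI[of _ e] conjI ballI impI)
        fix x' assume x': "x' \<in> S" "dist x' t < e"
        have "lep n (\<gamma> x') (\<gamma> t)" using e x' by blast
        moreover have "\<gamma> t \<in> W" using t by simp
        ultimately have "\<gamma> x' \<in> W" using Wd by blast
        then show "x' \<in> {x \<in> topspace (top_of_set S). \<gamma> x \<in> W}" using x' by simp
      qed (rule e)
    qed auto
  qed
qed

lemma stong_le:
  assumes mono: "\<forall>x y. lep n x y \<longrightarrow> lep n (\<phi> x) (\<phi> y)"
    and le: "\<forall>x. fst x \<le> n \<longrightarrow> lep n (\<phi> x) x"
  shows "fst x \<le> n \<Longrightarrow> \<phi> x = x"
proof -
  have "\<forall>x. fst x = k \<longrightarrow> fst x \<le> n \<longrightarrow> \<phi> x = x" for k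
  proof (induction k rule: less_induct)
    case (less k)
    show ?case
    proof (intro allI impI)
      fix x :: "nat \<times> bool" assume x: "fst x = k" "fst x \<le> n"
      have lx: "lep n (\<phi> x) x" using le x by blast
      show "\<phi> x = x"
      proof (cases k)
        case 0
        then show ?thesis using lx x by (auto simp: lep_def)
      next
        case (Suc j)
        have y1: "\<phi> (j, False) = (j, False)" using less[of j] Suc x by auto
        have y2: "\<phi> (j, True) = (j, True)" using less[of j] Suc x by auto
        have "lep n (j,False) x" "lep n (j,True) x" using Suc x by (auto simp: lep_def)
        then have a: "lep n (j,False) (\<phi> x)" "lep n (j,True) (\<phi> x)" using mono y1 y2 by metis+
        show ?thesis
        proof (rule ccontr)
          assume "\<phi> x \<noteq> x"
          then have "fst (\<phi> x) \<le> j" using lx Suc x by (auto simp: lep_def)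
          then show False using a by (cases "\<phi> x") (auto simp: lep_def)
        qed
      qed
    qed
  qed
  then show "fst x \<le> n \<Longrightarrow> \<phi> x = x" by blast
qed

lemma stong_ge:
  assumes mono: "\<forall>x y. lep n x y \<longrightarrow> lep n (\<phi> x) (\<phi> y)"
    and ge: "\<forall>x. fst x \<le> n \<longrightarrow> lep n x (\<phi> x)"
  shows "fst x \<le> n \<Longrightarrow> \<phi> x = x"
proof -
  have "\<forall>x. n - fst x = k \<longrightarrow> fst x \<le> n \<longrightarrow> \<phi> x = x" for k
  proof (induction k rule: less_induct)
    case (less k)
    show ?case
    proof (intro allI impI)
      fix x :: "nat \<times> bool" assume x: "n - fst x = k" "fst x \<le> n"
      have lx: "lep n x (\<phi> x)" using ge x by blast
      show "\<phi> x = x"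
      proof (cases k)
        case 0
        then show ?thesis using lx x by (auto simp: lep_def)
      next
        case (Suc j)
        have y1: "\<phi> (Suc (fst x), False) = (Suc (fst x), False)" using less[of j] Suc x by auto
        have y2: "\<phi> (Suc (fst x), True) = (Suc (fst x), True)" using less[of j] Suc x by auto
        have "lep n x (Suc (fst x),False)" "lep n x (Suc (fst x),True)" using Suc x by (auto simp: lep_def)
        then have a: "lep n (\<phi> x) (Suc (fst x),False)" "lep n (\<phi> x) (Suc (fst x),True)"
          using mono y1 y2 by metis+
        show ?thesis
        proof (rule ccontr)
          assume "\<phi> x \<noteq> x"
          then have "fst (\<phi> x) \<ge> Suc (fst x)" using lx by (auto simp: lep_def)
          then show False using a by (auto simp: lep_def)
        qed
      qed
    qed
  qed
  then show "fst x \<le> n \<Longrightarrow> \<phi> x = x" by blast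
qed

lemma cm_ts: "continuous_map X Y f \<Longrightarrow> x \<in> topspace X \<Longrightarrow> f x \<in> topspace Y"
  unfolding continuous_map_def Pi_def by blast

lemma prod_down:
  assumes "openin (prod_topology (finite_sphere n) (finite_sphere n)) W" "(a,b) \<in> W"
    "lep n a' a" "lep n b' b"
  shows "(a',b') \<in> W"
proof -
  obtain U V where UV: "openin (finite_sphere n) U" "openin (finite_sphere n) V" "a \<in> U" "b \<in> V" "U \<times> V \<subseteq> W"
    using iffD1[OF openin_prod_topology_alt assms(1), rule_format, OF assms(2)] by (elim exE conjE)
  have Ud: "\<forall>x\<in>U. \<forall>y. lep n y x \<longrightarrow> y \<in> U" using UV(1) unfolding openin_fs by blast
  have Vd: "\<forall>x\<in>V. \<forall>y. lep n y x \<longrightarrow> y \<in> V" using UV(2) unfolding openin_fs by blast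
  have "a' \<in> U" using Ud UV(3) assms(3) by blast
  moreover have "b' \<in> V" using Vd UV(4) assms(4) by blast
  ultimately show ?thesis using UV(5) by blast
qed

lemma topspace_path_space:
  "topspace (path_space X) = {\<gamma>. continuous_map (top_of_set {0..1::real}) X \<gamma> \<and> (\<forall>t. t \<notin> {0..1} \<longrightarrow> \<gamma> t = undefined)}"
proof -
  have "UNIV \<in> {{\<gamma>. \<gamma> ` K \<subseteq> U} | K U. compactin (top_of_set {0..1::real}) K \<and> openin X U}"
    by (rule CollectI, rule exI[of _ "{}"], rule exI[of _ "{}"]) auto
  then have "\<Union>{{\<gamma>. \<gamma> ` K \<subseteq> U} | K U. compactin (top_of_set {0..1::real}) K \<and> openin X U} = (UNIV :: (real \<Rightarrow> 'a) set)"
    by blast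
  then show ?thesis unfolding path_space_def by simp
qed

lemma mp_path:
  assumes c: "continuous_map (subtopology (prod_topology X X) U) (path_space X) s"
    and p: "p \<in> U" "p \<in> topspace X \<times> topspace X"
  shows "continuous_map (top_of_set {0..1::real}) X (s p)" "\<forall>t. t \<notin> {0..1} \<longrightarrow> s p t = undefined"
proof -
  have "p \<in> topspace (subtopology (prod_topology X X) U)" using p by (simp add: topspace_subtopology)
  then have "s p \<in> topspace (path_space X)" by (rule cm_ts[OF c])
  then show "continuous_map (top_of_set {0..1::real}) X (s p)" "\<forall>t. t \<notin> {0..1} \<longrightarrow> s p t = undefined"
    unfolding topspace_path_space by auto
qed

lemma mp_mono:
  assumes c: "continuous_map (subtopology (prod_topology (finite_sphere n) (finite_sphere n)) U) (path_space (finite_sphere n)) s"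
    and p: "(a,b) \<in> U" "(a',b') \<in> U" "lep n a' a" "lep n b' b" and t: "t \<in> {0..1}"
  shows "lep n (s (a',b') t) (s (a,b) t)"
proof -
  let ?X = "finite_sphere n"
  have ab: "(a,b) \<in> topspace ?X \<times> topspace ?X" "(a',b') \<in> topspace ?X \<times> topspace ?X"
    using p by (auto simp: topspace_fs lep_def)
  have cp: "continuous_map (top_of_set {0..1::real}) ?X (s (a,b))" using mp_path[OF c p(1) ab(1)] by blast
  then have st: "fst (s (a,b) t) \<le> n" using t unfolding cont_fs by blast
  define D where "D = {y. lep n y (s (a,b) t)}"
  have Dop: "openin ?X D" unfolding D_def using down_open st by simp
  define Ob where "Ob = {\<gamma>. \<gamma> ` {t} \<subseteq> D}"
  have "Ob \<in> {{\<gamma>. \<gamma> ` K \<subseteq> U} | K U. compactin (top_of_set {0..1::real}) K \<and> openin ?X U}"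
  proof -
    have "compactin (top_of_set {0..1::real}) {t}" using t by simp
    then show ?thesis unfolding Ob_def using Dop by blast
  qed
  then have "openin (topology_generated_by {{\<gamma>. \<gamma> ` K \<subseteq> U} | K U. compactin (top_of_set {0..1::real}) K \<and> openin ?X U}) Ob"
    by (simp add: openin_topology_generated_by_iff generate_topology_on.Basis)
  then have "openin (path_space ?X) ({\<gamma>. continuous_map (top_of_set {0..1::real}) ?X \<gamma> \<and> (\<forall>t. t \<notin> {0..1} \<longrightarrow> \<gamma> t = undefined)} \<inter> Ob)"
    unfolding path_space_def by (rule openin_subtopology_Int2)
  then have "openin (path_space ?X) (topspace (path_space ?X) \<inter> Ob)"
    by (simp only: topspace_path_space)
  then have "openin (subtopology (prod_topology ?X ?X) U) {x \<in> topspace (subtopology (prod_topology ?X ?X) U). s x \<in> topspace (path_space ?X) \<inter> Ob}"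
    using c unfolding continuous_map_def by blast
  then obtain W where W: "openin (prod_topology ?X ?X) W"
    "{x \<in> topspace (subtopology (prod_topology ?X ?X) U). s x \<in> topspace (path_space ?X) \<inter> Ob} = W \<inter> U"
    unfolding openin_subtopology by blast
  have sp: "s (a,b) \<in> topspace (path_space ?X)" "s (a',b') \<in> topspace (path_space ?X)"
    using cm_ts[OF c] p ab by (auto simp: topspace_subtopology)
  have tsub: "topspace (subtopology (prod_topology ?X ?X) U) = (topspace ?X \<times> topspace ?X) \<inter> U"
    by (simp add: topspace_subtopology)
  have "s (a,b) t \<in> D" unfolding D_def using st by (simp add: lep_def)
  then have "s (a,b) \<in> Ob" unfolding Ob_def by simp
  then have "(a,b) \<in> {x \<in> topspace (subtopology (prod_topology ?X ?X) U). s x \<in> topspace (path_space ?X) \<inter> Ob}"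
    using tsub ab p sp by simp
  then have "(a,b) \<in> W" using W(2) by blast
  then have "(a',b') \<in> W" by (rule prod_down[OF W(1) _ p(3) p(4)])
  then have "(a',b') \<in> W \<inter> U" using p by blast
  then have "(a',b') \<in> {x \<in> topspace (subtopology (prod_topology ?X ?X) U). s x \<in> topspace (path_space ?X) \<inter> Ob}"
    using W(2) by blast
  then have "s (a',b') t \<in> D" unfolding Ob_def by simp
  then show ?thesis unfolding D_def by simp
qed

lemma conn:
  assumes hc: "\<And>x. fst x \<le> n \<Longrightarrow> continuous_map (top_of_set {0..1::real}) (finite_sphere n) (\<lambda>t. h t x)"
    and hm: "\<And>t x y. t \<in> {0..1} \<Longrightarrow> lep n x y \<Longrightarrow> lep n (h t x) (h t y)"
  shows "(\<forall>x. fst x \<le> n \<longrightarrow> h 0 x = x) \<longleftrightarrow> (\<forall>x. fst x \<le> n \<longrightarrow> h 1 x = x)"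
proof -
  define I where "I = {0..1::real}"
  define C where "C = {p::nat\<times>bool. fst p \<le> n}"
  have finC: "finite C" 
  proof -
    have "C \<subseteq> {..n} \<times> UNIV" unfolding C_def by auto
    then show ?thesis by (rule finite_subset) auto
  qed
  have neC: "C \<noteq> {}" unfolding C_def by auto
  define N where "N t = {s\<in>I. \<forall>x\<in>C. lep n (h s x) (h t x)}" for t
  have hC: "fst (h t x) \<le> n" if "t \<in> I" "x \<in> C" for t x
    using hc[of x] that unfolding cont_fs C_def I_def by auto
  have Nopen: "openin (top_of_set I) (N t)" if t: "t \<in> I" for t
  proof -
    have Neq: "N t = (\<Inter>x\<in>C. {s \<in> topspace (top_of_set I). h s x \<in> {y. lep n y (h t x)}})"
      unfolding N_def using neC by auto
    have Op: "openin (top_of_set I) {s \<in> topspace (top_of_set I). h s x \<in> {y. lep n y (h t x)}}"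
      if "x \<in> C" for x
    proof -
      have "fst x \<le> n" using that unfolding C_def by simp
      then have "continuous_map (top_of_set {0..1}) (finite_sphere n) (\<lambda>t. h t x)" by (rule hc)
      then have "continuous_map (top_of_set I) (finite_sphere n) (\<lambda>t. h t x)" unfolding I_def .
      moreover have "openin (finite_sphere n) {y. lep n y (h t x)}" using down_open[of "h t x" n] hC[OF t that] by simp
      ultimately have "openin (top_of_set I) {s \<in> topspace (top_of_set I). (\<lambda>t. h t x) s \<in> {y. lep n y (h t x)}}"
        unfolding continuous_map_def by blast
      then show ?thesis by simp
    qed
    have "openin (top_of_set I) (\<Inter>x\<in>C. {s \<in> topspace (top_of_set I). h s x \<in> {y. lep n y (h t x)}})"
      by (rule openin_INT2[OF finC neC Op])
    then show ?thesis using Neq by simp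
  qed
  have tN: "t \<in> N t" if "t \<in> I" for t
    using that hC unfolding N_def by (auto simp: lep_def)
  define T where "T = {t\<in>I. \<forall>x\<in>C. h t x = x}"
  have mono: "\<forall>x y. lep n x y \<longrightarrow> lep n (h t x) (h t y)" if "t \<in> I" for t
    using hm that unfolding I_def by blast
  have c1: "s \<in> T" if "t \<in> T" "s \<in> N t" for s t
  proof -
    have s: "s \<in> I" using that unfolding N_def by auto
    have tt: "\<forall>x\<in>C. h t x = x" using that(1) unfolding T_def by blast
    have ss: "\<forall>x\<in>C. lep n (h s x) (h t x)" using that(2) unfolding N_def by blast
    have "\<forall>x. fst x \<le> n \<longrightarrow> lep n (h s x) x"
    proof (intro allI impI)
      fix x :: "nat \<times> bool" assume "fst x \<le> n"
      then have "x \<in> C" unfolding C_def by simp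
      then show "lep n (h s x) x" using tt ss by metis
    qed
    then have "\<forall>x. fst x \<le> n \<longrightarrow> h s x = x" using stong_le[OF mono[OF s]] by blast
    then have "\<forall>x\<in>C. h s x = x" unfolding C_def by simp
    then show ?thesis using s unfolding T_def by blast
  qed
  have c2: "s \<notin> T" if "t \<in> I - T" "s \<in> N t" for s t
  proof
    assume sT: "s \<in> T"
    have tt: "\<forall>x\<in>C. h s x = x" using sT unfolding T_def by blast
    have ss: "\<forall>x\<in>C. lep n (h s x) (h t x)" using that(2) unfolding N_def by blast
    have "\<forall>x. fst x \<le> n \<longrightarrow> lep n x (h t x)"
    proof (intro allI impI)
      fix x :: "nat \<times> bool" assume "fst x \<le> n"
      then have "x \<in> C" unfolding C_def by simp
      then show "lep n x (h t x)" using tt ss by metis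
    qed
    moreover have tI: "t \<in> I" using that(1) by blast
    ultimately have "\<forall>x. fst x \<le> n \<longrightarrow> h t x = x" using stong_ge[OF mono[OF tI]] by blast
    then have "\<forall>x\<in>C. h t x = x" unfolding C_def by simp
    then have "t \<in> T" using tI unfolding T_def by blast
    then show False using that by blast
  qed
  have T1: "T = (\<Union>t\<in>T. N t)" using c1 tN unfolding T_def by blast
  have T2: "I - T = (\<Union>t\<in>I - T. N t)" using c2 tN unfolding N_def by blast
  have oT: "openin (top_of_set I) T"
  proof -
    have "openin (top_of_set I) (\<Union>t\<in>T. N t)" using Nopen unfolding T_def by auto
    then show ?thesis using T1 by simp
  qed
  have oT2: "openin (top_of_set I) (I - T)"
  proof -
    have "openin (top_of_set I) (\<Union>t\<in>I - T. N t)" using Nopen by auto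
    then show ?thesis using T2 by simp
  qed
  have cT: "closedin (top_of_set I) T" unfolding closedin_def using oT2 T_def by auto
  have "connected I" unfolding I_def by simp
  then have "T = {} \<or> T = I" using oT cT unfolding connected_clopen by blast
  moreover have "0 \<in> I" "1 \<in> I" unfolding I_def by auto
  ultimately have "0 \<in> T \<longleftrightarrow> 1 \<in> T" by blast
  then show ?thesis unfolding T_def I_def C_def by auto
qed

lemma graph:
  assumes mp: "has_motion_planner (finite_sphere n) U"
    and fC: "\<And>x. fst x \<le> n \<Longrightarrow> fst (f x) \<le> n" and gC: "\<And>x. fst x \<le> n \<Longrightarrow> fst (g x) \<le> n"
    and fm: "\<And>x y. lep n x y \<Longrightarrow> lep n (f x) (f y)" and gm: "\<And>x y. lep n x y \<Longrightarrow> lep n (g x) (g y)"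
    and inU: "\<And>x. fst x \<le> n \<Longrightarrow> (f x, g x) \<in> U"
  shows "(\<forall>x. fst x \<le> n \<longrightarrow> f x = x) \<longleftrightarrow> (\<forall>x. fst x \<le> n \<longrightarrow> g x = x)"
proof -
  obtain s where c: "continuous_map (subtopology (prod_topology (finite_sphere n) (finite_sphere n)) U) (path_space (finite_sphere n)) s"
    and e: "\<forall>p\<in>U. (s p 0, s p 1) = p"
    using mp unfolding has_motion_planner_def by blast
  define h where "h t x = s (f x, g x) t" for t x
  have hc: "continuous_map (top_of_set {0..1::real}) (finite_sphere n) (\<lambda>t. h t x)" if "fst x \<le> n" for x
  proof -
    have "(f x, g x) \<in> topspace (finite_sphere n) \<times> topspace (finite_sphere n)"
      using fC gC that by (simp add: topspace_fs)
    then show ?thesis using mp_path(1)[OF c inU[OF that]] unfolding h_def by simp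
  qed
  have hm: "lep n (h t x) (h t y)" if "t \<in> {0..1}" "lep n x y" for t x y
  proof -
    have "fst x \<le> n" "fst y \<le> n" using that by (auto simp: lep_def)
    then show ?thesis unfolding h_def
      using mp_mono[OF c inU inU fm gm that(1)] that(2) by blast
  qed
  have h0: "h 0 x = f x" and h1: "h 1 x = g x" if "fst x \<le> n" for x
    using e inU[OF that] unfolding h_def by auto
  have "(\<forall>x. fst x \<le> n \<longrightarrow> h 0 x = x) \<longleftrightarrow> (\<forall>x. fst x \<le> n \<longrightarrow> h 1 x = x)"
    by (rule conn[OF hc hm])
  then show ?thesis using h0 h1 by auto
qed

lemma two_max:
  assumes n: "n \<ge> 1"
    and U: "openin (prod_topology (finite_sphere n) (finite_sphere n)) U"
    and mp: "has_motion_planner (finite_sphere n) U"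
    and m1: "((n,a1),(n,b1)) \<in> U" and m2: "((n,a2),(n,b2)) \<in> U" and ne: "(a1,b1) \<noteq> (a2,b2)"
  shows False
proof -
  have low: "lep n x (n,c)" if "fst x < n" for x c using that by (auto simp: lep_def)
  have rfl: "lep n x x" if "fst x \<le> n" for x using that by (auto simp: lep_def)
  have x0: "fst (0::nat, False) \<le> n" by simp
  show False
  proof (cases "a1 = a2")
    case True
    then have bne: "b1 \<noteq> b2" using ne by auto
    have inU: "((n,a1), x) \<in> U" if "fst x \<le> n" for x
    proof (cases "fst x < n")
      case True
      then show ?thesis using prod_down[OF U m1 rfl low[OF True]] by simp
    next
      case False
      then have "x = (n, snd x)" using that by (metis le_neq_implies_less prod.collapse)
      moreover have "snd x = b1 \<or> snd x = b2" using bne by auto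
      ultimately have "x = (n,b1) \<or> x = (n,b2)" by auto
      then show ?thesis using m1 m2 `a1 = a2` by (elim disjE) simp_all
    qed
    have "(\<forall>x. fst x \<le> n \<longrightarrow> (n,a1) = x) \<longleftrightarrow> (\<forall>x::nat\<times>bool. fst x \<le> n \<longrightarrow> id x = x)"
      by (rule graph[OF mp, where f="\<lambda>x. (n,a1)" and g=id]) (auto simp: inU lep_def)
    then have "\<forall>x::nat\<times>bool. fst x \<le> n \<longrightarrow> (n,a1) = x" by simp
    then have "(n,a1) = (0::nat,False)" by (erule_tac x="(0,False)" in allE) simp
    then show False using n by simp
  next
    case a: False
    show False
    proof (cases "b1 = b2")
      case True
      have inU: "(x, (n,b1)) \<in> U" if "fst x \<le> n" for x
      proof (cases "fst x < n")
        case True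
        then show ?thesis using prod_down[OF U m1 low[OF True] rfl] by simp
      next
        case False
        then have "x = (n, snd x)" using that by (metis le_neq_implies_less prod.collapse)
        moreover have "snd x = a1 \<or> snd x = a2" using a by auto
        ultimately have "x = (n,a1) \<or> x = (n,a2)" by auto
        then show ?thesis using m1 m2 `b1 = b2` by (elim disjE) simp_all
      qed
      have "(\<forall>x::nat\<times>bool. fst x \<le> n \<longrightarrow> id x = x) \<longleftrightarrow> (\<forall>x. fst x \<le> n \<longrightarrow> (n,b1) = x)"
        by (rule graph[OF mp, where f=id and g="\<lambda>x. (n,b1)"]) (auto simp: inU lep_def)
      then have "\<forall>x::nat\<times>bool. fst x \<le> n \<longrightarrow> (n,b1) = x" by simp
      then have "(n,b1) = (0::nat,False)" by (erule_tac x="(0,False)" in allE) simp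
      then show False using n by simp
    next
      case b: False
      define \<tau> where "\<tau> x = (if fst x < n then (fst x, \<not> snd x) else (n, if snd x = a1 then b1 else b2))" for x
      have tC: "fst (\<tau> x) \<le> n" for x unfolding \<tau>_def by auto
      have tf: "fst (\<tau> x) = fst x" if "fst x \<le> n" for x using that unfolding \<tau>_def by auto
      have tm: "lep n (\<tau> x) (\<tau> y)" if "lep n x y" for x y
      proof (cases "x = y")
        case True then show ?thesis using that tC by (simp add: lep_def)
      next
        case False
        then have "fst x < fst y" "fst y \<le> n" using that by (auto simp: lep_def)
        then show ?thesis using tf tC by (simp add: lep_def)
      qed
      have inU: "(x, \<tau> x) \<in> U" if "fst x \<le> n" for x
      proof (cases "fst x < n")
        case True
        have "lep n (\<tau> x) (n,b1)" using True tf low by simp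
        then show ?thesis using prod_down[OF U m1 low[OF True]] by simp
      next
        case False
        then have xe: "x = (n, snd x)" using that by (metis le_neq_implies_less prod.collapse)
        show ?thesis
        proof (cases "snd x = a1")
          case True
          then have "x = (n,a1)" "\<tau> x = (n,b1)" using xe False unfolding \<tau>_def by auto
          then show ?thesis using m1 by simp
        next
          case False
          then have "snd x = a2" using a by auto
          then have "x = (n,a2)" "\<tau> x = (n,b2)" using xe `\<not> fst x < n` a unfolding \<tau>_def by auto
          then show ?thesis using m2 by simp
        qed
      qed
      have "(\<forall>x::nat\<times>bool. fst x \<le> n \<longrightarrow> id x = x) \<longleftrightarrow> (\<forall>x. fst x \<le> n \<longrightarrow> \<tau> x = x)"
        by (rule graph[OF mp, where f=id and g=\<tau>]) (auto simp: inU tm tC)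
      then have "\<forall>x::nat\<times>bool. fst x \<le> n \<longrightarrow> \<tau> x = x" by simp
      then have "\<tau> (0,False) = (0,False)" by (erule_tac x="(0,False)" in allE) simp
      then show False using n unfolding \<tau>_def by simp
    qed
  qed
qed

definition pth :: "nat \<Rightarrow> bool \<Rightarrow> bool \<Rightarrow> nat \<times> bool \<Rightarrow> nat \<times> bool \<Rightarrow> real \<Rightarrow> nat \<times> bool" where
  "pth n a b x y t = (if t \<in> {0..1} then (if t < 1/4 then x else if t = 1/4 then (n,a)
      else if t < 3/4 then (0,False) else if t = 3/4 then (n,b) else y) else undefined)"

lemma pth_mono:
  assumes "lep n x' x" "lep n y' y"
  shows "pth n a b x' y' t = pth n a b x y t \<or> lep n (pth n a b x' y' t) (pth n a b x y t)"
  using assms unfolding pth_def by auto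

lemma pth_cont:
  assumes n: "n \<ge> 1" and x: "lep n x (n,a)" and y: "lep n y (n,b)"
  shows "continuous_map (top_of_set {0..1}) (finite_sphere n) (pth n a b x y)"
  unfolding cont_fs
proof
  fix t :: real assume t: "t \<in> {0..1}"
  have xC: "fst x \<le> n" and yC: "fst y \<le> n" using x y by (auto simp: lep_def)
  have rx: "lep n x x" "lep n y y" using xC yC by (auto simp: lep_def)
  have low: "lep n (0,False) (n,c)" for c using n by (auto simp: lep_def)
  have rn: "lep n (n,c) (n,c)" for c by (auto simp: lep_def)
  have r0: "lep n (0,False) (0,False)" by (auto simp: lep_def)
  have fC: "fst (pth n a b x y t) \<le> n" using t xC yC unfolding pth_def by auto
  have "\<exists>e>0. \<forall>s\<in>{0..1}. dist s t < e \<longrightarrow> lep n (pth n a b x y s) (pth n a b x y t)"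
  proof (cases "t < 1/4")
    case True
    show ?thesis
    proof (intro exI[of _ "1/4 - t"] conjI ballI impI)
      show "0 < 1/4 - t" using True by simp
      fix s :: real assume s: "s \<in> {0..1}" "dist s t < 1/4 - t"
      then have "s < 1/4" unfolding dist_real_def abs_less_iff by linarith
      then show "lep n (pth n a b x y s) (pth n a b x y t)" using s t True rx unfolding pth_def by simp
    qed
  next
    case F1: False
    show ?thesis
    proof (cases "t = 1/4")
      case True
      show ?thesis
      proof (intro exI[of _ "1/4"] conjI ballI impI)
        fix s :: real assume s: "s \<in> {0..1}" "dist s t < 1/4"
        then have "s < 3/4" using True unfolding dist_real_def abs_less_iff by linarith
        then show "lep n (pth n a b x y s) (pth n a b x y t)" using s t True x low rn unfolding pth_def by simp
      qed simp
    next
      case F2: False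
      show ?thesis
      proof (cases "t < 3/4")
        case True
        show ?thesis
        proof (intro exI[of _ "min (t - 1/4) (3/4 - t)"] conjI ballI impI)
          show "0 < min (t - 1/4) (3/4 - t)" using True F1 F2 by simp
          fix s :: real assume s: "s \<in> {0..1}" "dist s t < min (t - 1/4) (3/4 - t)"
          then have "1/4 < s" "s < 3/4" unfolding dist_real_def abs_less_iff min_less_iff_conj by linarith+
          then show "lep n (pth n a b x y s) (pth n a b x y t)" using s t True F1 F2 r0 unfolding pth_def by simp
        qed
      next
        case F3: False
        show ?thesis
        proof (cases "t = 3/4")
          case True
          show ?thesis
          proof (intro exI[of _ "1/4"] conjI ballI impI)
            fix s :: real assume s: "s \<in> {0..1}" "dist s t < 1/4"
            then have "1/4 < s" using True unfolding dist_real_def abs_less_iff by linarith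
            then show "lep n (pth n a b x y s) (pth n a b x y t)" using s t True y low rn unfolding pth_def by simp
          qed simp
        next
          case F4: False
          show ?thesis
          proof (intro exI[of _ "t - 3/4"] conjI ballI impI)
            show "0 < t - 3/4" using F3 F4 by simp
            fix s :: real assume s: "s \<in> {0..1}" "dist s t < t - 3/4"
            then have "3/4 < s" unfolding dist_real_def abs_less_iff by linarith
            then show "lep n (pth n a b x y s) (pth n a b x y t)" using s t F1 F2 F3 F4 rx unfolding pth_def by simp
          qed
        qed
      qed
    qed
  qed
  then show "fst (pth n a b x y t) \<le> n \<and> (\<exists>e>0. \<forall>s\<in>{0..1}. dist s t < e \<longrightarrow> lep n (pth n a b x y s) (pth n a b x y t))"
    using fC by blast
qed

definition sbox :: "nat \<Rightarrow> bool \<Rightarrow> bool \<Rightarrow> ((nat \<times> bool) \<times> (nat \<times> bool)) set" where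
  "sbox n a b = {x. lep n x (n,a)} \<times> {y. lep n y (n,b)}"

lemma UNIV_subbasis:
  "\<Union>{{\<gamma>. \<gamma> ` K \<subseteq> U} | K U. compactin (top_of_set {0..1::real}) K \<and> openin X U} = (UNIV :: (real \<Rightarrow> 'a) set)"
proof -
  have "UNIV \<in> {{\<gamma>. \<gamma> ` K \<subseteq> U} | K U. compactin (top_of_set {0..1::real}) K \<and> openin X U}"
    by (rule CollectI, rule exI[of _ "{}"], rule exI[of _ "{}"]) auto
  then show ?thesis by blast
qed

lemma sbox_open: "openin (prod_topology (finite_sphere n) (finite_sphere n)) (sbox n a b)"
proof -
  have "openin (finite_sphere n) {x. lep n x (n,a)}" "openin (finite_sphere n) {y. lep n y (n,b)}"
    using down_open[of "(n,a)" n] down_open[of "(n,b)" n] by auto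
  then show ?thesis unfolding sbox_def openin_prod_Times_iff by blast
qed

lemma mp_sbox:
  assumes n: "n \<ge> 1"
  shows "has_motion_planner (finite_sphere n) (sbox n a b)"
proof -
  let ?X = "finite_sphere n"
  let ?SS = "{{\<gamma>. \<gamma> ` K \<subseteq> U} | K U. compactin (top_of_set {0..1::real}) K \<and> openin ?X U}"
  let ?P = "{\<gamma>. continuous_map (top_of_set {0..1::real}) ?X \<gamma> \<and> (\<forall>t. t \<notin> {0..1} \<longrightarrow> \<gamma> t = undefined)}"
  define s where "s p = pth n a b (fst p) (snd p)" for p
  have ts: "topspace (subtopology (prod_topology ?X ?X) (sbox n a b)) = sbox n a b"
    unfolding topspace_subtopology topspace_prod_topology topspace_fs sbox_def by (auto simp: lep_def)
  have c1: "continuous_map (subtopology (prod_topology ?X ?X) (sbox n a b)) (topology_generated_by ?SS) s"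
  proof (rule continuous_on_generated_topo)
    fix Ob assume "Ob \<in> ?SS"
    then obtain K W where Ob: "Ob = {\<gamma>. \<gamma> ` K \<subseteq> W}" and W: "openin ?X W" by blast
    have Wd: "\<forall>x\<in>W. \<forall>y. lep n y x \<longrightarrow> y \<in> W" using W unfolding openin_fs by blast
    define D where "D = s -` Ob \<inter> sbox n a b"
    have "openin (prod_topology ?X ?X) D"
      unfolding openin_prod_topology_alt
    proof (intro allI impI)
      fix x y assume xy: "(x,y) \<in> D"
      have xl: "lep n x (n,a)" and yl: "lep n y (n,b)" using xy unfolding D_def sbox_def by auto
      have img: "pth n a b x y ` K \<subseteq> W" using xy unfolding D_def Ob s_def by simp
      show "\<exists>U V. openin ?X U \<and> openin ?X V \<and> x \<in> U \<and> y \<in> V \<and> U \<times> V \<subseteq> D"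
      proof (rule exI[of _ "{x'. lep n x' x}"], rule exI[of _ "{y'. lep n y' y}"], intro conjI)
        show "openin ?X {x'. lep n x' x}" using down_open[of x n] xl by (simp add: lep_def)
        show "openin ?X {y'. lep n y' y}" using down_open[of y n] yl by (simp add: lep_def)
        show "x \<in> {x'. lep n x' x}" using xl by (simp add: lep_def)
        show "y \<in> {y'. lep n y' y}" using yl by (simp add: lep_def)
        show "{x'. lep n x' x} \<times> {y'. lep n y' y} \<subseteq> D"
        proof
          fix q assume "q \<in> {x'. lep n x' x} \<times> {y'. lep n y' y}"
          then obtain x' y' where q: "q = (x',y')" "lep n x' x" "lep n y' y" by blast
          have "lep n x' (n,a)" "lep n y' (n,b)" using q xl yl lep_trans by blast+
          then have qb: "q \<in> sbox n a b" using q unfolding sbox_def by simp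
          have "pth n a b x' y' t \<in> W" if "t \<in> K" for t
          proof -
            have "pth n a b x y t \<in> W" using img that by blast
            then show ?thesis using pth_mono[OF q(2) q(3), of a b t] Wd by metis
          qed
          then have "s q \<in> Ob" unfolding Ob s_def q by auto
          then show "q \<in> D" using qb unfolding D_def by simp
        qed
      qed
    qed
    moreover have "D \<subseteq> sbox n a b" unfolding D_def by blast
    ultimately have "openin (subtopology (prod_topology ?X ?X) (sbox n a b)) D"
      by (rule subset_openin_subtopology)
    then show "openin (subtopology (prod_topology ?X ?X) (sbox n a b))
          (s -` Ob \<inter> topspace (subtopology (prod_topology ?X ?X) (sbox n a b)))"
      unfolding ts D_def .
  next
    show "s ` topspace (subtopology (prod_topology ?X ?X) (sbox n a b)) \<subseteq> \<Union> ?SS"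
      unfolding UNIV_subbasis by simp
  qed
  have c2: "s \<in> topspace (subtopology (prod_topology ?X ?X) (sbox n a b)) \<rightarrow> ?P"
  proof
    fix p assume "p \<in> topspace (subtopology (prod_topology ?X ?X) (sbox n a b))"
    then have p: "lep n (fst p) (n,a)" "lep n (snd p) (n,b)" unfolding ts sbox_def by auto
    have "continuous_map (top_of_set {0..1}) ?X (s p)" unfolding s_def by (rule pth_cont[OF n p])
    moreover have "\<forall>t. t \<notin> {0..1} \<longrightarrow> s p t = undefined" unfolding s_def pth_def by simp
    ultimately show "s p \<in> ?P" by simp
  qed
  have "continuous_map (subtopology (prod_topology ?X ?X) (sbox n a b)) (path_space ?X) s"
    unfolding path_space_def continuous_map_in_subtopology using c1 c2 by blast
  moreover have "\<forall>p\<in>sbox n a b. (s p 0, s p 1) = p" unfolding s_def pth_def by simp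
  ultimately show ?thesis unfolding has_motion_planner_def by blast
qed

lemma lower:
  fixes k :: nat and U :: "nat \<Rightarrow> ((nat \<times> bool) \<times> (nat \<times> bool)) set"
  assumes n: "n \<ge> 1"
    and cov: "\<forall>i<k. openin (prod_topology (finite_sphere n) (finite_sphere n)) (U i) \<and> has_motion_planner (finite_sphere n) (U i)"
    and un: "(\<Union>i<k. U i) = topspace (prod_topology (finite_sphere n) (finite_sphere n))"
  shows "4 \<le> k"
proof (rule ccontr)
  assume "\<not> 4 \<le> k"
  then have k3: "k \<le> 3" by simp
  have ex: "\<exists>i<k. ((n,a),(n,b)) \<in> U i" for a b
  proof -
    have "((n,a),(n,b)) \<in> topspace (prod_topology (finite_sphere n) (finite_sphere n))"
      by (simp add: topspace_fs)
    then show ?thesis using un by blast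
  qed
  define idx where "idx a b = (SOME i. i < k \<and> ((n,a),(n,b)) \<in> U i)" for a b
  have idx: "idx a b < k \<and> ((n,a),(n,b)) \<in> U (idx a b)" for a b
    unfolding idx_def using someI_ex[OF ex[of a b]] by blast
  have bad: False if "idx a1 b1 = idx a2 b2" "(a1,b1) \<noteq> (a2,b2)" for a1 b1 a2 b2
  proof -
    have "idx a1 b1 < k" using idx by blast
    then have "openin (prod_topology (finite_sphere n) (finite_sphere n)) (U (idx a1 b1))"
      "has_motion_planner (finite_sphere n) (U (idx a1 b1))" using cov by blast+
    moreover have "((n,a1),(n,b1)) \<in> U (idx a1 b1)" "((n,a2),(n,b2)) \<in> U (idx a1 b1)"
      using idx[of a1 b1] idx[of a2 b2] that(1) by simp_all
    ultimately show False using two_max[OF n] that(2) by blast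
  qed
  have "idx False False < 3" "idx False True < 3" "idx True False < 3" "idx True True < 3"
    using idx k3 by (meson less_le_trans)+
  then have "idx False False = idx False True \<or> idx False False = idx True False \<or> idx False False = idx True True
     \<or> idx False True = idx True False \<or> idx False True = idx True True \<or> idx True False = idx True True"
    by arith
  then show False using bad by blast
qed

lemma cover:
  "(\<Union>i<(4::nat). sbox n (odd i) (2 \<le> i)) = topspace (prod_topology (finite_sphere n) (finite_sphere n))"
proof
  show "(\<Union>i<(4::nat). sbox n (odd i) (2 \<le> i)) \<subseteq> topspace (prod_topology (finite_sphere n) (finite_sphere n))"
    unfolding sbox_def by (auto simp: topspace_fs lep_def)
next
  show "topspace (prod_topology (finite_sphere n) (finite_sphere n)) \<subseteq> (\<Union>i<(4::nat). sbox n (odd i) (2 \<le> i))"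
  proof
    fix p assume "p \<in> topspace (prod_topology (finite_sphere n) (finite_sphere n))"
    then obtain x y where p: "p = (x,y)" "fst x \<le> n" "fst y \<le> n" by (auto simp: topspace_fs)
    define a where "a = (if fst x = n then snd x else False)"
    define b where "b = (if fst y = n then snd y else False)"
    have xa: "lep n x (n,a)" unfolding a_def lep_def using p by (cases x) auto
    have yb: "lep n y (n,b)" unfolding b_def lep_def using p by (cases y) auto
    define i where "i = (if a then 1 else 0) + (if b then 2 else (0::nat))"
    have "i < 4" "odd i = a" "(2 \<le> i) = b" unfolding i_def by auto
    then show "p \<in> (\<Union>i<(4::nat). sbox n (odd i) (2 \<le> i))" using xa yb p unfolding sbox_def by auto
  qed
qed

theorem corollary7:
  fixes n :: nat
  assumes "n \<ge> 1"
  shows "TC (finite_sphere n) = 4"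
proof -
  define K where "K = {k. \<exists>U :: nat \<Rightarrow> ((nat \<times> bool) \<times> (nat \<times> bool)) set.
              (\<forall>i<k. openin (prod_topology (finite_sphere n) (finite_sphere n)) (U i) \<and> has_motion_planner (finite_sphere n) (U i))
              \<and> (\<Union>i<k. U i) = topspace (prod_topology (finite_sphere n) (finite_sphere n))}"
  have TCK: "TC (finite_sphere n) = (INF k \<in> K. enat k)" unfolding TC_def K_def ..
  have "4 \<in> K" unfolding K_def
    by (rule CollectI, rule exI[of _ "\<lambda>i. sbox n (odd i) (2 \<le> i)"]) (use sbox_open mp_sbox[OF assms] cover in auto)
  then have le: "(INF k \<in> K. enat k) \<le> enat 4" by (rule INF_lower)
  have ge: "enat 4 \<le> (INF k \<in> K. enat k)"
  proof (rule INF_greatest)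
    fix k assume "k \<in> K"
    then have "4 \<le> k" unfolding K_def using lower[OF assms] by blast
    then show "enat 4 \<le> enat k" by simp
  qed
  have "(INF k \<in> K. enat k) = enat 4" using le ge by (rule antisym)
  then show ?thesis using TCK by (simp add: numeral_eq_enat)
qed

end
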